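(* Let $n\ge 2$. For each measurable function $f:\mathbb{R}\to\mathbb{R}$ and each real number $x$, the following are equivalent: (a) the Peano derivative $f_{(n-1)}(x)$ exists and, for every $j=0,1,\dots,n-2$, the limit $$D_{n,j}f(x)=\lim_{h\to0}h^{-n}\sum_{i=0}^n(-1)^i\binom ni f\big(x+(n+j-i)h\big)$$ exists (as a finite real number); (b) the Peano derivative $f_{(n)}(x)$ exists. *)

theory Defs
  imports "HOL-Analysis.Analysis"
begin

definition peano_diff :: "(real \<Rightarrow> real) \<Rightarrow> real \<Rightarrow> nat \<Rightarrow> bool" where
  "peano_diff f x k \<longleftrightarrow>
     (\<exists>c::nat \<Rightarrow> real. c 0 = f x \<and>
        ((\<lambda>h. (f (x + h) - (\<Sum>i\<le>k. c i * h ^ i / fact i)) / h ^ k) \<longlongrightarrow> 0) (at 0))"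

definition D_quot :: "nat \<Rightarrow> nat \<Rightarrow> (real \<Rightarrow> real) \<Rightarrow> real \<Rightarrow> real \<Rightarrow> real" where
  "D_quot n j f x h =
     (\<Sum>i\<le>n. (-1) ^ i * real (n choose i) * f (x + (real n + real j - real i) * h)) / h ^ n"

end

theory Submission
  imports Defs
begin


fun fd :: "nat \<Rightarrow> (nat \<Rightarrow> real) \<Rightarrow> nat \<Rightarrow> real" where
  "fd 0 a m = a m"
| "fd (Suc k) a m = fd k (\<lambda>j. a (Suc j) - a j) m"

lemma fd_sum: "fd k (\<lambda>m. \<Sum>q\<in>Q. F q m) j = (\<Sum>q\<in>Q. fd k (F q) j)"
proof (induction k arbitrary: F)
  case 0 then show ?case by simp
next
  case (Suc k)
  have "fd (Suc k) (\<lambda>m. \<Sum>q\<in>Q. F q m) j = fd k (\<lambda>m. \<Sum>q\<in>Q. F q (Suc m) - F q m) j"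
    by (simp add: sum_subtractf)
  also have "\<dots> = (\<Sum>q\<in>Q. fd (Suc k) (F q) j)" using Suc by simp
  finally show ?case .
qed

lemma fd_diff: "fd k (\<lambda>m. a m - b m) j = fd k a j - fd k b j"
proof (induction k arbitrary: a b)
  case 0 then show ?case by simp
next
  case (Suc k)
  have "fd (Suc k) (\<lambda>m. a m - b m) j = fd k (\<lambda>m. (a (Suc m) - a m) - (b (Suc m) - b m)) j"
    by (simp add: algebra_simps)
  then show ?case using Suc by simp
qed

lemma fd_add: "fd k (\<lambda>m. a m + b m) j = fd k a j + fd k b j"
proof (induction k arbitrary: a b)
  case 0 then show ?case by simp
next
  case (Suc k)
  have "fd (Suc k) (\<lambda>m. a m + b m) j = fd k (\<lambda>m. (a (Suc m) - a m) + (b (Suc m) - b m)) j"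
    by (simp add: algebra_simps)
  then show ?case using Suc by simp
qed

lemma fd_cmult: "fd k (\<lambda>m. c * a m) j = c * fd k a j"
proof (induction k arbitrary: a)
  case 0 then show ?case by simp
next
  case (Suc k)
  have "fd (Suc k) (\<lambda>m. c * a m) j = fd k (\<lambda>m. c * (a (Suc m) - a m)) j"
    by (simp add: algebra_simps)
  then show ?case using Suc by simp
qed

lemma fd_shift: "fd k (\<lambda>m. a (Suc m)) j = fd k a (Suc j)"
  by (induction k arbitrary: a) auto

lemma fd_Suc2: "fd (Suc k) a j = fd k a (Suc j) - fd k a j"
proof -
  have "fd (Suc k) a j = fd k (\<lambda>m. a (Suc m)) j - fd k a j"
    using fd_diff[of k "\<lambda>m. a (Suc m)" a j] by simp
  then show ?thesis by (simp add: fd_shift)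
qed

lemma pascal_sum:
  fixes F :: "nat \<Rightarrow> real"
  shows "(\<Sum>r\<le>Suc i. real (Suc i choose r) * F r)
       = (\<Sum>r\<le>i. real (i choose r) * F r) + (\<Sum>r\<le>i. real (i choose r) * F (Suc r))"
proof -
  have "(\<Sum>r\<le>Suc i. real (Suc i choose r) * F r)
     = F 0 + (\<Sum>r\<le>i. real (Suc i choose Suc r) * F (Suc r))"
    by (subst sum.atMost_Suc_shift) simp
  also have "\<dots> = F 0 + (\<Sum>r\<le>i. real (i choose r) * F (Suc r)) + (\<Sum>r\<le>i. real (i choose Suc r) * F (Suc r))"
    by (simp add: sum.distrib algebra_simps)
  also have "(\<Sum>r\<le>i. real (i choose Suc r) * F (Suc r)) = (\<Sum>r\<le>Suc i. real (i choose r) * F r) - F 0"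
    by (subst sum.atMost_Suc_shift[of _ i]) simp
  also have "(\<Sum>r\<le>Suc i. real (i choose r) * F r) = (\<Sum>r\<le>i. real (i choose r) * F r)"
    by simp
  finally show ?thesis by simp
qed

lemma fd_closed0: "fd k a j = (\<Sum>r\<le>k. real (k choose r) * ((-1) ^ (k - r) * a (j + r)))"
proof (induction k arbitrary: j)
  case 0 then show ?case by simp
next
  case (Suc k)
  have "fd (Suc k) a j = fd k a (Suc j) - fd k a j" by (rule fd_Suc2)
  also have "\<dots> = (\<Sum>r\<le>k. real (k choose r) * ((-1) ^ (Suc k - Suc r) * a (j + Suc r)))
      + (\<Sum>r\<le>k. real (k choose r) * ((-1) ^ (Suc k - r) * a (j + r)))"
  proof -
    have "(\<Sum>r\<le>k. real (k choose r) * ((-1) ^ (Suc k - r) * a (j + r)))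
        = - (\<Sum>r\<le>k. real (k choose r) * ((-1) ^ (k - r) * a (j + r)))"
      by (simp add: sum_negf[symmetric] Suc_diff_le)
    then show ?thesis using Suc by simp
  qed
  also have "\<dots> = (\<Sum>r\<le>Suc k. real (Suc k choose r) * ((-1) ^ (Suc k - r) * a (j + r)))"
    by (subst pascal_sum) (simp add: add.commute)
  finally show ?case .
qed

lemma fd_closed: "fd k a j = (\<Sum>i\<le>k. (-1) ^ i * real (k choose i) * a (j + k - i))"
proof -
  have "fd k a j = (\<Sum>r=0..k. real (k choose r) * ((-1) ^ (k - r) * a (j + r)))"
    by (simp add: fd_closed0 atMost_atLeast0)
  also have "\<dots> = (\<Sum>i=0..k. real (k choose (k - i)) * ((-1) ^ (k - (k - i)) * a (j + (k - i))))"
    by (subst sum.atLeastAtMost_rev) simp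
  also have "\<dots> = (\<Sum>i=0..k. (-1) ^ i * real (k choose i) * a (j + k - i))"
    by (rule sum.cong) (auto simp: binomial_symmetric[symmetric])
  finally show ?thesis by (simp add: atMost_atLeast0)
qed

lemma fd_double: "fd i (\<lambda>k. a (2 * k)) 0 = (\<Sum>r\<le>i. real (i choose r) * fd i a r)"
proof (induction i arbitrary: a)
  case 0 then show ?case by simp
next
  case (Suc i)
  define d where "d = (\<lambda>m. a (Suc m) - a m)"
  define b where "b = (\<lambda>m. d (Suc m) + d m)"
  have "fd (Suc i) (\<lambda>k. a (2 * k)) 0 = fd i (\<lambda>k. b (2 * k)) 0"
    by (simp add: b_def d_def)
  also have "\<dots> = (\<Sum>r\<le>i. real (i choose r) * fd i b r)" by (rule Suc)
  also have "\<dots> = (\<Sum>r\<le>i. real (i choose r) * (fd (Suc i) a (Suc r) + fd (Suc i) a r))"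
  proof -
    have "\<And>r. fd i b r = fd (Suc i) a (Suc r) + fd (Suc i) a r"
    proof -
      fix r
      have "fd i b r = fd i (\<lambda>m. d (Suc m)) r + fd i d r" unfolding b_def by (rule fd_add)
      also have "\<dots> = fd i d (Suc r) + fd i d r" by (simp add: fd_shift)
      also have "fd i d = fd (Suc i) a" by (simp add: d_def fun_eq_iff)
      finally show "fd i b r = fd (Suc i) a (Suc r) + fd (Suc i) a r" .
    qed
    then show ?thesis by simp
  qed
  also have "\<dots> = (\<Sum>r\<le>Suc i. real (Suc i choose r) * fd (Suc i) a r)"
    by (subst pascal_sum) (simp add: sum.distrib algebra_simps)
  finally show ?case .
qed

lemma fd_pow: "p < k \<Longrightarrow> fd k (\<lambda>m. real m ^ p) j = 0"
proof (induction k arbitrary: p)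
  case 0 then show ?case by simp
next
  case (Suc k)
  have e: "\<And>m. real (Suc m) ^ p - real m ^ p = (\<Sum>q<p. real (p choose q) * real m ^ q)"
  proof -
    fix m
    have "real (Suc m) ^ p = (real m + 1) ^ p" by (simp add: add.commute)
    also have "\<dots> = (\<Sum>q\<le>p. real (p choose q) * real m ^ q)"
      by (simp add: binomial_ring)
    also have "\<dots> = (\<Sum>q<p. real (p choose q) * real m ^ q) + real m ^ p"
      by (simp add: lessThan_Suc_atMost[symmetric])
    finally show "real (Suc m) ^ p - real m ^ p = (\<Sum>q<p. real (p choose q) * real m ^ q)" by simp
  qed
  have "fd (Suc k) (\<lambda>m. real m ^ p) j = fd k (\<lambda>m. real (Suc m) ^ p - real m ^ p) j"
    by (simp only: fd.simps)
  also have "\<dots> = fd k (\<lambda>m. \<Sum>q<p. real (p choose q) * real m ^ q) j"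
    by (simp only: e)
  also have "\<dots> = (\<Sum>q<p. real (p choose q) * fd k (\<lambda>m. real m ^ q) j)"
    by (simp add: fd_sum fd_cmult)
  also have "\<dots> = 0" using Suc by (intro sum.neutral) auto
  finally show ?case .
qed



lemma ev_nz: "eventually (\<lambda>h::real. h \<noteq> 0) (at 0)"
  by (simp add: eventually_at_filter)

lemma tendsto_scale:
  fixes \<phi> :: "real \<Rightarrow> real"
  assumes "(\<phi> \<longlongrightarrow> l) (at 0)" "\<mu> \<noteq> 0"
  shows "((\<lambda>h. \<phi> (\<mu> * h)) \<longlongrightarrow> l) (at 0)"
proof -
  have "filterlim (\<lambda>h::real. \<mu> * h) (at 0) (at 0)"
    unfolding filterlim_at
  proof
    show "\<forall>\<^sub>F x in at 0. \<mu> * x \<in> UNIV \<and> \<mu> * x \<noteq> 0"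
      using ev_nz by eventually_elim (use assms(2) in simp)
    show "((*) \<mu> \<longlongrightarrow> 0) (at (0::real))"
      by (intro tendsto_eq_intros) auto
  qed
  then show ?thesis by (rule filterlim_compose[OF assms(1)])
qed

lemma small_term:
  fixes G :: "real \<Rightarrow> real"
  assumes "G 0 = 0" "((\<lambda>h. G h / h ^ N) \<longlongrightarrow> 0) (at 0)"
  shows "((\<lambda>h. G (real \<mu> * h) / h ^ N) \<longlongrightarrow> 0) (at 0)"
proof (cases "\<mu> = 0")
  case True then show ?thesis using assms(1) by simp
next
  case False
  have "((\<lambda>h. real \<mu> ^ N * (G (real \<mu> * h) / (real \<mu> * h) ^ N)) \<longlongrightarrow> real \<mu> ^ N * 0) (at 0)"
    by (intro tendsto_mult tendsto_const tendsto_scale[OF assms(2)]) (use False in simp)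
  moreover have "eventually (\<lambda>h. real \<mu> ^ N * (G (real \<mu> * h) / (real \<mu> * h) ^ N) = G (real \<mu> * h) / h ^ N) (at 0)"
    using ev_nz by eventually_elim (use False in \<open>simp add: power_mult_distrib\<close>)
  ultimately show ?thesis using Lim_transform_eventually by fastforce
qed

lemma small_fd:
  fixes G :: "real \<Rightarrow> real"
  assumes "G 0 = 0" "((\<lambda>h. G h / h ^ N) \<longlongrightarrow> 0) (at 0)"
  shows "((\<lambda>h. fd i (\<lambda>m. G (real m * h)) t / h ^ N) \<longlongrightarrow> 0) (at 0)"
proof -
  have "((\<lambda>h. \<Sum>r\<le>i. (-1) ^ r * real (i choose r) * (G (real (t + i - r) * h) / h ^ N))
        \<longlongrightarrow> (\<Sum>r\<le>i. (-1) ^ r * real (i choose r) * 0)) (at 0)"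
    by (intro tendsto_sum tendsto_mult tendsto_const small_term[OF assms])
  then show ?thesis
    by (simp add: fd_closed sum_divide_distrib)
qed

definition convh :: "(real \<Rightarrow> real) \<Rightarrow> bool" where
  "convh \<phi> \<longleftrightarrow> (\<exists>L. (\<phi> \<longlongrightarrow> L) (at 0))"

lemma convh_add: "convh a \<Longrightarrow> convh b \<Longrightarrow> convh (\<lambda>h. a h + b h)"
  unfolding convh_def by (auto intro: tendsto_add)

lemma convh_cmult: "convh a \<Longrightarrow> convh (\<lambda>h. c * a h)"
  unfolding convh_def by (metis tendsto_mult_left)

lemma convh_sum: "finite S \<Longrightarrow> (\<And>s. s \<in> S \<Longrightarrow> convh (F s)) \<Longrightarrow> convh (\<lambda>h. \<Sum>s\<in>S. F s h)"
proof (induction S rule: finite_induct)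
  case empty then show ?case by (simp add: convh_def) (auto intro: tendsto_const)
next
  case (insert x S)
  then show ?case by (simp add: convh_add)
qed

lemma convh_cong: "convh a \<Longrightarrow> eventually (\<lambda>h. a h = b h) (at 0) \<Longrightarrow> convh b"
  unfolding convh_def using Lim_transform_eventually by blast

lemma key_abstract:
  fixes w e :: "real \<Rightarrow> real" and lam :: real
  assumes lam: "lam \<ge> 2"
    and e: "(e \<longlongrightarrow> 0) (at 0)"
    and hw: "((\<lambda>h. h * w h) \<longlongrightarrow> 0) (at 0)"
    and rec: "\<And>h. h \<noteq> 0 \<Longrightarrow> w h = (w (h / 2) + e h) / lam"
  shows "(w \<longlongrightarrow> 0) (at 0)"
  unfolding LIM_eq
proof (intro allI impI)
  fix \<epsilon> :: real assume "\<epsilon> > 0"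
  then have "\<epsilon>/3 > 0" by simp
  obtain \<delta> where d: "\<delta> > 0" "\<And>h. h \<noteq> 0 \<Longrightarrow> norm (h - 0) < \<delta> \<Longrightarrow> norm (e h - 0) < \<epsilon>/3"
    using e[unfolded LIM_eq] \<open>\<epsilon>/3 > 0\<close> by blast
  have lp: "lam > 0" using lam by simp
  have bound: "\<And>k h. h \<noteq> 0 \<Longrightarrow> \<bar>h\<bar> < \<delta> \<Longrightarrow> \<bar>w h\<bar> \<le> \<bar>w (h / 2 ^ k)\<bar> / lam ^ k + \<epsilon>/3"
  proof -
    fix k
    show "\<And>h. h \<noteq> 0 \<Longrightarrow> \<bar>h\<bar> < \<delta> \<Longrightarrow> \<bar>w h\<bar> \<le> \<bar>w (h / 2 ^ k)\<bar> / lam ^ k + \<epsilon>/3"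
    proof (induction k)
      case 0 then show ?case using \<open>\<epsilon>>0\<close> by simp
    next
      case (Suc k)
      have h2: "h/2 \<noteq> 0" "\<bar>h/2\<bar> < \<delta>" using Suc.prems by auto
      have IH: "\<bar>w (h/2)\<bar> \<le> \<bar>w (h / 2 / 2 ^ k)\<bar> / lam ^ k + \<epsilon>/3"
        using Suc.IH[OF h2] .
      have eh: "\<bar>e h\<bar> < \<epsilon>/3" using d(2)[of h] Suc.prems by simp
      have "\<bar>w h\<bar> = \<bar>w (h/2) + e h\<bar> / lam" using rec[OF Suc.prems(1)] lp by simp
      also have "\<dots> \<le> (\<bar>w (h/2)\<bar> + \<bar>e h\<bar>) / lam"
        using lp by (intro divide_right_mono abs_triangle_ineq) auto
      also have "\<dots> \<le> (\<bar>w (h / 2 / 2 ^ k)\<bar> / lam ^ k + \<epsilon>/3 + \<epsilon>/3) / lam"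
        using IH eh lp by (intro divide_right_mono) auto
      also have "\<dots> = \<bar>w (h / 2 ^ Suc k)\<bar> / lam ^ Suc k + (2*\<epsilon>/3) / lam"
        using lp by (simp add: field_simps)
      also have "(2*\<epsilon>/3) / lam \<le> \<epsilon>/3"
        using lam \<open>\<epsilon>>0\<close> by (simp add: field_simps)
      finally show ?case by simp
    qed
  qed
  show "\<exists>s>0. \<forall>h. h \<noteq> 0 \<and> norm (h - 0) < s \<longrightarrow> norm (w h - 0) < \<epsilon>"
  proof (intro exI[of _ \<delta>] conjI allI impI)
    show "\<delta> > 0" by (rule d(1))
    fix h :: real assume hh: "h \<noteq> 0 \<and> norm (h - 0) < \<delta>"
    have ha: "\<bar>h\<bar> > 0" using hh by simp
    have "\<epsilon>/3 * \<bar>h\<bar> > 0" using ha \<open>\<epsilon>>0\<close> by simp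
    then obtain \<delta>' where d': "\<delta>' > 0" "\<And>t. t \<noteq> 0 \<Longrightarrow> norm (t - 0) < \<delta>' \<Longrightarrow> norm (t * w t - 0) < \<epsilon>/3 * \<bar>h\<bar>"
      using hw[unfolded LIM_eq] by blast
    obtain k :: nat where k: "\<bar>h\<bar> / \<delta>' < 2 ^ k"
      using real_arch_pow[of 2 "\<bar>h\<bar> / \<delta>'"] by auto
    define t where "t = h / 2 ^ k"
    have tnz: "t \<noteq> 0" using hh by (simp add: t_def)
    have tsm: "\<bar>t\<bar> < \<delta>'" using k d'(1) by (simp add: t_def abs_divide field_simps)
    have tw: "\<bar>t * w t\<bar> < \<epsilon>/3 * \<bar>h\<bar>" using d'(2)[OF tnz] tsm by simp
    have "\<bar>w t\<bar> / lam ^ k \<le> \<bar>w t\<bar> / 2 ^ k"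
      using lam by (intro divide_left_mono power_mono) auto
    also have "\<bar>w t\<bar> / 2 ^ k = \<bar>t * w t\<bar> / \<bar>h\<bar>"
      using ha by (simp add: t_def abs_mult abs_divide field_simps)
    also have "\<dots> < \<epsilon>/3" using tw ha by (simp add: field_simps)
    finally have "\<bar>w t\<bar> / lam ^ k < \<epsilon>/3" .
    moreover have "\<bar>w h\<bar> \<le> \<bar>w t\<bar> / lam ^ k + \<epsilon>/3"
      unfolding t_def using bound[of h k] hh by simp
    ultimately have "\<bar>w h\<bar> < \<epsilon>" by linarith
    then show "norm (w h - 0) < \<epsilon>" by simp
  qed
qed



lemma alg: fixes X Y H P Q L M :: real
  shows "H \<noteq> 0 \<Longrightarrow> P \<noteq> 0 \<Longrightarrow> Q \<noteq> 0 \<Longrightarrow> L*(P*Q - P) = M \<Longrightarrow> X/H - L = ((Y/(H/(P*Q)) - L) + ((X - P*Y)/(H/(P*Q)) - M)/P)/Q"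
  apply (drule sym) apply simp
  apply (simp add: field_simps)
  done

lemma key_applied:
  fixes c R :: "real \<Rightarrow> real" and n i :: nat
  assumes "i < n"
    and rel: "\<And>h. c (2 * h) - 2 ^ i * c h = R h"
    and R: "((\<lambda>h. R h / h ^ n) \<longlongrightarrow> M) (at 0)"
    and sm: "((\<lambda>h. c h / h ^ (n - 1)) \<longlongrightarrow> 0) (at 0)"
  shows "convh (\<lambda>h. c h / h ^ n)"
proof -
  define P :: real where "P = 2 ^ i"
  define Q :: real where "Q = 2 ^ (n - i)"
  have PQ: "(2::real) ^ n = P * Q" unfolding P_def Q_def
    using assms(1) by (simp flip: power_add)
  have P1: "P \<ge> 1" unfolding P_def by simp
  have Q2: "Q \<ge> 2"
  proof -
    have "(2::real) ^ 1 \<le> 2 ^ (n - i)" by (rule power_increasing) (use assms(1) in auto)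
    then show ?thesis unfolding Q_def by simp
  qed
  define L where "L = M / (P * Q - P)"
  have nz: "P * Q - P \<noteq> 0"
  proof -
    have "P * Q \<ge> P * 2" using P1 Q2 by (intro mult_left_mono) auto
    then show ?thesis using P1 by linarith
  qed
  have LM: "L * (P * Q - P) = M" unfolding L_def using nz by simp
  define w where "w = (\<lambda>h. c h / h ^ n - L)"
  define e where "e = (\<lambda>h. (R (h/2) / (h/2) ^ n - M) / P)"
  have "w \<midarrow>0\<rightarrow> 0"
  proof (rule key_abstract[of Q e])
    show "Q \<ge> 2" by (rule Q2)
    have "((\<lambda>h. R ((1/2) * h) / ((1/2) * h) ^ n) \<longlongrightarrow> M) (at 0)"
      by (rule tendsto_scale[OF R]) simp
    then have "((\<lambda>h. R (h/2) / (h/2) ^ n) \<longlongrightarrow> M) (at 0)" by simp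
    then have "((\<lambda>h. (R (h/2) / (h/2) ^ n - M) / P) \<longlongrightarrow> (M - M) / P) (at 0)"
      by (intro tendsto_intros) (use P1 in auto)
    then show "e \<midarrow>0\<rightarrow> 0" unfolding e_def by simp
    have "((\<lambda>h. c h / h ^ (n - 1) - h * L) \<longlongrightarrow> 0 - 0 * L) (at 0)"
      by (intro tendsto_intros sm)
    moreover have "eventually (\<lambda>h. c h / h ^ (n - 1) - h * L = h * w h) (at 0)"
      using ev_nz
    proof eventually_elim
      case (elim h)
      have "h ^ n = h * h ^ (n - 1)" using assms(1)
        by (metis Suc_pred' less_nat_zero_code not_gr_zero power_Suc)
      then show ?case using elim by (simp add: w_def field_simps)
    qed
    ultimately show "((\<lambda>h. h * w h) \<longlongrightarrow> 0) (at 0)"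
      using Lim_transform_eventually by fastforce
    fix h :: real assume hnz: "h \<noteq> 0"
    have r2: "c h = P * c (h/2) + R (h/2)" using rel[of "h/2"] unfolding P_def by simp
    have hn: "(h/2) ^ n = h ^ n / (P * Q)" using PQ by (simp add: power_divide)
    have hnz': "h ^ n \<noteq> 0" using hnz by simp
    show "w h = (w (h / 2) + e h) / Q"
    proof -
      have r3: "R (h/2) = c h - P * c (h/2)" using r2 by simp
      show ?thesis unfolding w_def e_def r3 hn
        by (rule alg[OF hnz']) (use P1 Q2 LM in auto)
    qed
  qed
  then have "((\<lambda>h. w h + L) \<longlongrightarrow> 0 + L) (at 0)" by (intro tendsto_intros)
  then show ?thesis unfolding convh_def w_def by auto
qed



lemma choose_row_sum_real: "(\<Sum>k\<le>n. real (n choose k)) = 2 ^ n"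
  by (metis choose_row_sum of_nat_numeral of_nat_power of_nat_sum)

lemma fd_telescope: "fd i a t = fd i a 0 + (\<Sum>s<t. fd (Suc i) a s)"
proof -
  have "(\<Sum>s<t. fd (Suc i) a s) = (\<Sum>s<t. fd i a (Suc s) - fd i a s)" by (simp only: fd_Suc2)
  also have "\<dots> = fd i a t - fd i a 0" by (rule sum_lessThan_telescope)
  finally show ?thesis by simp
qed

lemma core:
  fixes g :: "real \<Rightarrow> real" and n :: nat
  assumes n2: "n \<ge> 2" and g0: "g 0 = 0"
    and sm: "((\<lambda>h. g h / h ^ (n - 1)) \<longlongrightarrow> 0) (at 0)"
    and Dq: "\<And>j. j \<le> n - 2 \<Longrightarrow> convh (\<lambda>h. fd n (\<lambda>m. g (real m * h)) j / h ^ n)"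
  shows "convh (\<lambda>h. g h / h ^ n)"
proof -
  define A where "A = (\<lambda>i t h. fd i (\<lambda>m. g (real m * h)) t)"
  have claim: "d \<le> n - 1 \<Longrightarrow> (\<forall>t. n - d + t \<le> 2 * n - 2 \<longrightarrow> convh (\<lambda>h. A (n - d) t h / h ^ n))" for d
  proof (induction d)
    case 0 then show ?case using Dq n2 unfolding A_def by auto
  next
    case (Suc d)
    define i where "i = n - Suc d"
    have iS: "Suc i = n - d" using Suc.prems unfolding i_def by simp
    have i1: "i \<ge> 1" "i < n" using Suc.prems n2 unfolding i_def by auto
    have IH: "\<And>t. Suc i + t \<le> 2 * n - 2 \<Longrightarrow> convh (\<lambda>h. A (Suc i) t h / h ^ n)"
      using Suc.IH Suc.prems iS by auto
    have tel: "\<And>t h. A i t h = A i 0 h + (\<Sum>s<t. A (Suc i) s h)"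
      unfolding A_def by (rule fd_telescope)
    define R where "R = (\<lambda>h. \<Sum>r\<le>i. real (i choose r) * (\<Sum>s<r. A (Suc i) s h))"
    have rel: "A i 0 (2 * h) - 2 ^ i * A i 0 h = R h" for h
    proof -
      have "A i 0 (2 * h) = fd i (\<lambda>k. (\<lambda>m. g (real m * h)) (2 * k)) 0"
        unfolding A_def by (simp add: mult.assoc mult.left_commute)
      also have "\<dots> = (\<Sum>r\<le>i. real (i choose r) * A i r h)"
        unfolding A_def by (rule fd_double)
      also have "\<dots> = (\<Sum>r\<le>i. real (i choose r) * A i 0 h) + R h"
        unfolding R_def by (subst tel) (simp add: sum.distrib algebra_simps)
      also have "(\<Sum>r\<le>i. real (i choose r) * A i 0 h) = 2 ^ i * A i 0 h"
        by (simp add: sum_distrib_right[symmetric] choose_row_sum_real)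
      finally show ?thesis by simp
    qed
    have cR: "convh (\<lambda>h. R h / h ^ n)"
    proof -
      have "convh (\<lambda>h. \<Sum>r\<le>i. real (i choose r) * (\<Sum>s<r. A (Suc i) s h / h ^ n))"
      proof (intro convh_sum convh_cmult)
        fix r s assume "r \<in> {..i}" "s \<in> {..<r}"
        then have "Suc i + s \<le> 2 * n - 2" using i1 by auto
        then show "convh (\<lambda>h. A (Suc i) s h / h ^ n)" by (rule IH)
      qed auto
      then show ?thesis unfolding R_def by (simp add: sum_divide_distrib sum_distrib_left)
    qed
    then obtain M where M: "((\<lambda>h. R h / h ^ n) \<longlongrightarrow> M) (at 0)" unfolding convh_def by blast
    have c0: "convh (\<lambda>h. A i 0 h / h ^ n)"
      by (rule key_applied[OF i1(2) rel M]) (unfold A_def, rule small_fd[OF g0 sm])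
    show ?case
    proof (intro allI impI)
      fix t assume t: "n - Suc d + t \<le> 2 * n - 2"
      have "convh (\<lambda>h. A i 0 h / h ^ n + (\<Sum>s<t. A (Suc i) s h / h ^ n))"
      proof (intro convh_add c0 convh_sum)
        fix s assume "s \<in> {..<t}"
        then have "Suc i + s \<le> 2 * n - 2" using t unfolding i_def by auto
        then show "convh (\<lambda>h. A (Suc i) s h / h ^ n)" by (rule IH)
      qed auto
      then show "convh (\<lambda>h. A (n - Suc d) t h / h ^ n)"
        unfolding i_def[symmetric] by (subst tel) (simp add: add_divide_distrib sum_divide_distrib)
    qed
  qed
  have "convh (\<lambda>h. A (n - (n - 1)) 0 h / h ^ n)" using claim[of "n - 1"] n2 by auto
  moreover have "n - (n - 1) = 1" using n2 by simp
  ultimately show ?thesis unfolding A_def using g0 by simp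
qed



lemma poly_kill:
  assumes "N < n"
  shows "fd n (\<lambda>m. \<Sum>p\<le>N. c p * (real m * h) ^ p / fact p) j = 0"
proof -
  have "fd n (\<lambda>m. \<Sum>p\<le>N. c p * (real m * h) ^ p / fact p) j
      = fd n (\<lambda>m. \<Sum>p\<le>N. (c p * h ^ p / fact p) * real m ^ p) j"
    by (intro arg_cong[where f="\<lambda>a. fd n a j"] ext sum.cong refl) (simp add: power_mult_distrib)
  also have "\<dots> = (\<Sum>p\<le>N. (c p * h ^ p / fact p) * fd n (\<lambda>m. real m ^ p) j)"
    by (simp only: fd_sum fd_cmult)
  also have "\<dots> = 0" using assms by (intro sum.neutral) (auto simp: fd_pow)
  finally show ?thesis .
qed

lemma sum_split_last: "(n::nat) \<ge> 1 \<Longrightarrow> (\<Sum>i\<le>n. F i) = (\<Sum>i\<le>n - 1. F i) + (F n :: real)"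
proof -
  assume "n \<ge> 1"
  then obtain k where "n = Suc k" by (cases n) auto
  then show ?thesis by simp
qed

lemma sum_at0: "(\<Sum>i\<le>N. c i * (0::real) ^ i / fact i) = c 0"
  by (induction N) auto

lemma Dquot_fd:
  assumes "h \<noteq> 0"
  shows "D_quot n j f x h = fd n (\<lambda>m. f (x + real m * h)) j / h ^ n"
proof -
  have "fd n (\<lambda>m. f (x + real m * h)) j
      = (\<Sum>i\<le>n. (-1) ^ i * real (n choose i) * f (x + (real n + real j - real i) * h))"
    unfolding fd_closed by (rule sum.cong) (auto simp: of_nat_diff algebra_simps)
  then show ?thesis unfolding D_quot_def by simp
qed

theorem theorem2:
  fixes f :: "real \<Rightarrow> real" and x :: real and n :: nat
  assumes "n \<ge> 2"
    and "f \<in> borel_measurable lebesgue"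
  shows "(peano_diff f x (n - 1) \<and>
            (\<forall>j\<le>n - 2. \<exists>L. (D_quot n j f x \<longlongrightarrow> L) (at 0)))
         \<longleftrightarrow> peano_diff f x n"
proof
  assume H: "peano_diff f x (n - 1) \<and> (\<forall>j\<le>n - 2. \<exists>L. (D_quot n j f x \<longlongrightarrow> L) (at 0))"
  then obtain c where c0: "c 0 = f x"
    and cl: "((\<lambda>h. (f (x + h) - (\<Sum>i\<le>n - 1. c i * h ^ i / fact i)) / h ^ (n - 1)) \<longlongrightarrow> 0) (at 0)"
    unfolding peano_diff_def by blast
  define g where "g = (\<lambda>h. f (x + h) - (\<Sum>i\<le>n - 1. c i * h ^ i / fact i))"
  have g0: "g 0 = 0" unfolding g_def using c0 by (simp add: sum_at0)
  have sm: "((\<lambda>h. g h / h ^ (n - 1)) \<longlongrightarrow> 0) (at 0)" using cl unfolding g_def .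
  have Dq: "convh (\<lambda>h. fd n (\<lambda>m. g (real m * h)) j / h ^ n)" if j: "j \<le> n - 2" for j
  proof -
    have "convh (D_quot n j f x)" using H j unfolding convh_def by blast
    moreover have "eventually (\<lambda>h. D_quot n j f x h = fd n (\<lambda>m. g (real m * h)) j / h ^ n) (at 0)"
      using ev_nz
    proof eventually_elim
      case (elim h)
      have "fd n (\<lambda>m. g (real m * h)) j = fd n (\<lambda>m. f (x + real m * h)) j
           - fd n (\<lambda>m. \<Sum>i\<le>n - 1. c i * (real m * h) ^ i / fact i) j"
        unfolding g_def by (rule fd_diff)
      also have "\<dots> = fd n (\<lambda>m. f (x + real m * h)) j"
        using assms(1) by (simp add: poly_kill)
      finally show ?case using Dquot_fd[OF elim] by simp
    qed
    ultimately show ?thesis by (rule convh_cong)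
  qed
  have "convh (\<lambda>h. g h / h ^ n)" by (rule core[OF assms(1) g0 sm Dq])
  then obtain K where K: "((\<lambda>h. g h / h ^ n) \<longlongrightarrow> K) (at 0)" unfolding convh_def by blast
  define c' where "c' = c(n := K * fact n)"
  show "peano_diff f x n"
    unfolding peano_diff_def
  proof (intro exI[of _ c'] conjI)
    show "c' 0 = f x" using c0 assms(1) by (simp add: c'_def)
    have lim: "((\<lambda>h. g h / h ^ n - K) \<longlongrightarrow> K - K) (at 0)" by (rule tendsto_diff[OF K tendsto_const])
    have ev: "eventually (\<lambda>h. g h / h ^ n - K = (f (x + h) - (\<Sum>i\<le>n. c' i * h ^ i / fact i)) / h ^ n) (at 0)"
      using ev_nz
    proof eventually_elim
      case (elim h)
      have "(\<Sum>i\<le>n. c' i * h ^ i / fact i) = (\<Sum>i\<le>n - 1. c' i * h ^ i / fact i) + c' n * h ^ n / fact n"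
        using assms(1) by (intro sum_split_last) simp
      also have "(\<Sum>i\<le>n - 1. c' i * h ^ i / fact i) = (\<Sum>i\<le>n - 1. c i * h ^ i / fact i)"
        using assms(1) by (intro sum.cong) (auto simp: c'_def)
      finally have "(\<Sum>i\<le>n. c' i * h ^ i / fact i) = (\<Sum>i\<le>n - 1. c i * h ^ i / fact i) + K * h ^ n"
        by (simp add: c'_def)
      then show ?case using elim unfolding g_def by (simp add: field_simps)
    qed
    show "((\<lambda>h. (f (x + h) - (\<Sum>i\<le>n. c' i * h ^ i / fact i)) / h ^ n) \<longlongrightarrow> 0) (at 0)"
      using Lim_transform_eventually[OF lim ev] by simp
  qed
next
  assume "peano_diff f x n"
  then obtain c where c0: "c 0 = f x"
    and cl: "((\<lambda>h. (f (x + h) - (\<Sum>i\<le>n. c i * h ^ i / fact i)) / h ^ n) \<longlongrightarrow> 0) (at 0)"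
    unfolding peano_diff_def by blast
  define G where "G = (\<lambda>h. f (x + h) - (\<Sum>i\<le>n. c i * h ^ i / fact i))"
  have G0: "G 0 = 0" unfolding G_def using c0 by (simp add: sum_at0)
  have Gl: "((\<lambda>h. G h / h ^ n) \<longlongrightarrow> 0) (at 0)" using cl unfolding G_def .
  have split: "(\<Sum>i\<le>n. c i * y ^ i / fact i) = (\<Sum>i\<le>n - 1. c i * y ^ i / fact i) + c n * y ^ n / fact n" for y
    using assms(1) by (intro sum_split_last) simp
  have P1: "peano_diff f x (n - 1)"
    unfolding peano_diff_def
  proof (intro exI[of _ c] conjI)
    show "c 0 = f x" by (rule c0)
    have lim: "((\<lambda>h. G h / h ^ n * h + c n / fact n * h) \<longlongrightarrow> 0 * 0 + c n / fact n * 0) (at 0)"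
      by (rule tendsto_add[OF tendsto_mult[OF Gl tendsto_ident_at] tendsto_mult[OF tendsto_const tendsto_ident_at]])
    have ev: "eventually (\<lambda>h. G h / h ^ n * h + c n / fact n * h
        = (f (x + h) - (\<Sum>i\<le>n - 1. c i * h ^ i / fact i)) / h ^ (n - 1)) (at 0)"
      using ev_nz
    proof eventually_elim
      case (elim h)
      have hn: "h ^ n = h * h ^ (n - 1)" using assms(1)
      proof -
        obtain k where "n = Suc k" using assms(1) by (cases n) auto
        then show ?thesis by simp
      qed
      show ?case using elim unfolding G_def split hn by (simp add: field_simps)
    qed
    show "((\<lambda>h. (f (x + h) - (\<Sum>i\<le>n - 1. c i * h ^ i / fact i)) / h ^ (n - 1)) \<longlongrightarrow> 0) (at 0)"
      using Lim_transform_eventually[OF lim ev] by simp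
  qed
  have "\<exists>L. (D_quot n j f x \<longlongrightarrow> L) (at 0)" for j
  proof -
    define C where "C = c n / fact n * fd n (\<lambda>m. real m ^ n) j"
    have lim: "((\<lambda>h. fd n (\<lambda>m. G (real m * h)) j / h ^ n + C) \<longlongrightarrow> 0 + C) (at 0)"
      by (rule tendsto_add[OF small_fd[OF G0 Gl] tendsto_const])
    have ev: "eventually (\<lambda>h. fd n (\<lambda>m. G (real m * h)) j / h ^ n + C = D_quot n j f x h) (at 0)"
      using ev_nz
    proof eventually_elim
      case (elim h)
      have e1: "f (x + real m * h) = G (real m * h) + ((\<Sum>i\<le>n - 1. c i * (real m * h) ^ i / fact i)
                + (c n * h ^ n / fact n) * real m ^ n)" for m
      proof -
        have t: "c n * (real m * h) ^ n / fact n = (c n * h ^ n / fact n) * real m ^ n"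
          by (simp add: power_mult_distrib)
        show ?thesis unfolding G_def split t by (simp only: diff_add_cancel)
      qed
      have "fd n (\<lambda>m. f (x + real m * h)) j = fd n (\<lambda>m. G (real m * h)) j
           + (fd n (\<lambda>m. \<Sum>i\<le>n - 1. c i * (real m * h) ^ i / fact i) j
              + (c n * h ^ n / fact n) * fd n (\<lambda>m. real m ^ n) j)"
        unfolding e1 by (simp only: fd_add fd_cmult)
      also have "fd n (\<lambda>m. \<Sum>i\<le>n - 1. c i * (real m * h) ^ i / fact i) j = 0"
        using assms(1) by (intro poly_kill) simp
      finally have F: "fd n (\<lambda>m. f (x + real m * h)) j = fd n (\<lambda>m. G (real m * h)) j
           + (0 + (c n * h ^ n / fact n) * fd n (\<lambda>m. real m ^ n) j)" .
      show ?case using elim unfolding Dquot_fd[OF elim] F C_def by (simp add: field_simps)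
    qed
    show ?thesis using Lim_transform_eventually[OF lim ev] by blast
  qed
  then show "peano_diff f x (n - 1) \<and> (\<forall>j\<le>n - 2. \<exists>L. (D_quot n j f x \<longlongrightarrow> L) (at 0))"
    using P1 by blast
qed

end
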